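(* For all integers $n\ge1$, $m\ge3$, every prime power $q$, and every positive integer $k$, $$\Pr_{\pi,\pi'\sim\Pi_{mn}}\left[\mathrm{def}(\mathbf{A}_{\pi,\pi'})\ge k\right]\le\left(\frac{n^2}{(n/2)^{m-2}}\right)^{\frac{k-1}{2}},$$ where $\pi,\pi'$ are independent uniformly random permutations of $[mn]$.
   Context: $\Pi_{mn}$ is the set of permutations of $[mn]$. For a permutation $\pi$ of $[mn]$, $\mathbf{A}_\pi\in\mathbb{F}_q^{n\times mn}$ has $(\mathbf{A}_\pi)_{i,j}=1$ if $j\in\pi(\{m(i-1)+1,\dots,mi\})$ and $0$ otherwise. $\mathbf{A}_{\pi,\pi'}\in\mathbb{F}_q^{2n\times mn}$ is the matrix whose first $n$ rows are $\mathbf{A}_\pi$ and last $n$ rows are $\mathbf{A}_{\pi'}$, and $\mathrm{def}(\mathbf{A}_{\pi,\pi'})=2n-\mathrm{rank}(\mathbf{A}_{\pi,\pi'})$, rank over $\mathbb{F}_q$. *)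

theory Defs
  imports "HOL-Combinatorics.Permutations" "Jordan_Normal_Form.DL_Rank"
begin

text \<open>Indices are 0-based: [mn] is rendered as {0..<m*n}, row i (0-based)
  corresponds to block {m*i ..< m*(i+1)}.\<close>

definition A_mat :: "'a::field itself \<Rightarrow> nat \<Rightarrow> nat \<Rightarrow> (nat \<Rightarrow> nat) \<Rightarrow> 'a mat" where
  "A_mat ty m n \<pi> = mat n (m*n)
     (\<lambda>(i,j). if j \<in> \<pi> ` {m*i ..< m*(i+1)} then 1 else 0)"

definition A_pair :: "'a::field itself \<Rightarrow> nat \<Rightarrow> nat \<Rightarrow> (nat \<Rightarrow> nat) \<Rightarrow> (nat \<Rightarrow> nat) \<Rightarrow> 'a mat" where
  "A_pair ty m n \<pi> \<pi>' = mat (2*n) (m*n)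
     (\<lambda>(i,j). if i < n then A_mat ty m n \<pi> $$ (i,j) else A_mat ty m n \<pi>' $$ (i-n,j))"

definition deficiency :: "'a::field itself \<Rightarrow> nat \<Rightarrow> nat \<Rightarrow> (nat \<Rightarrow> nat) \<Rightarrow> (nat \<Rightarrow> nat) \<Rightarrow> nat" where
  "deficiency ty m n \<pi> \<pi>' = 2*n - vec_space.rank (2*n) (A_pair ty m n \<pi> \<pi>')"

end

theory Submission
  imports Defs "HOL-Combinatorics.Permutations" Complex_Main
begin

context vec_space begin

lemma incid_invariant:
  fixes A :: "'a mat" and a b :: "nat \<Rightarrow> nat" and h N :: nat
  assumes A: "A \<in> carrier_mat n N"
  and colA: "\<And>x i. x < N \<Longrightarrow> i < n \<Longrightarrow> A $$ (i,x) = (if i = a x then 1 else 0) + (if i = b x then 1 else 0)"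
  and ab: "\<And>x. x<N \<Longrightarrow> a x < h \<and> h \<le> b x \<and> b x < n"
  shows "t \<le> N \<Longrightarrow> \<exists>(lab::nat\<Rightarrow>nat) U. U \<subseteq> col A ` {0..<t} \<and> lin_indpt U \<and> (\<forall>x<t. lab (a x) = lab (b x))
            \<and> card U + card (lab ` {0..<n}) = n"
proof (induction t)
  case 0
  show ?case
  proof -
    have "lin_indpt {}" unfolding lin_dep_def by auto
    then show ?thesis by (intro exI[of _ id] exI[of _ "{}"]) auto
  qed
next
  case (Suc t)
  then obtain lab :: "nat \<Rightarrow> nat" and U where U: "U \<subseteq> col A ` {0..<t}" and li: "lin_indpt U"
    and lx: "\<forall>x<t. lab (a x) = lab (b x)" and cU: "card U + card (lab ` {0..<n}) = n"
    by auto
  have tN: "t < N" using Suc by auto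
  have Ucar: "U \<subseteq> carrier_vec n" using U A tN by (force intro: col_carrier_vec)
  have finU: "finite U" using U finite_surj by blast
  show ?case
  proof (cases "lab (a t) = lab (b t)")
    case True
    show ?thesis
      by (rule exI[of _ lab], rule exI[of _ U]) (use U li lx cU True in \<open>auto simp: less_Suc_eq\<close>)
  next
    case False
    define l0 where "l0 = lab (a t)"
    define w :: "nat \<Rightarrow> 'a" where "w i = (if i < h then 1 else -1)" for i
    define g where "g i = (if lab i = l0 then w i else 0)" for i
    define \<phi> where "\<phi> u = (\<Sum>i\<in>{0..<n}. g i * u $ i)" for u :: "'a vec"
    have phicol: "\<phi> (col A x) = g (a x) + g (b x)" if "x < N" for x
    proof -
      have "\<phi> (col A x) = (\<Sum>i\<in>{0..<n}. (if i = a x then g i else 0) + (if i = b x then g i else 0))"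
        unfolding \<phi>_def using that A colA by (intro sum.cong) (auto simp: col_def)
      also have "\<dots> = g (a x) + g (b x)" using ab[OF that]
        by (simp add: sum.distrib)
      finally show ?thesis .
    qed
    have phiU: "\<phi> u = 0" if uU: "u \<in> U" for u
    proof -
      obtain x where x: "x < t" "u = col A x" using U uU by auto
      have "g (a x) + g (b x) = 0" using lx x ab[of x] tN unfolding g_def w_def by auto
      then show ?thesis using phicol[of x] x tN by simp
    qed
    have phiv: "\<phi> (col A t) = 1" using phicol[OF tN] False ab[OF tN] unfolding g_def w_def l0_def by auto
    have vcar: "col A t \<in> carrier_vec n" using A tN by auto
    have notspan: "col A t \<notin> span U"
    proof
      assume "col A t \<in> span U"
      then obtain c B where cB: "col A t = lincomb c B" "finite B" "B \<subseteq> U" by (meson in_spanE)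
      have Bcar: "B \<subseteq> carrier_vec n" using cB Ucar by auto
      have "\<phi> (lincomb c B) = (\<Sum>i\<in>{0..<n}. g i * (\<Sum>u\<in>B. c u * u $ i))"
        unfolding \<phi>_def using lincomb_index[OF _ Bcar] by (intro sum.cong) auto
      also have "\<dots> = (\<Sum>u\<in>B. c u * \<phi> u)"
        unfolding \<phi>_def sum_distrib_left by (subst sum.swap) (auto intro!: sum.cong simp: ac_simps)
      also have "\<dots> = 0" using phiU cB by (intro sum.neutral) (metis mult_zero_right subsetD)
      finally show False using phiv cB by simp
    qed
    have vnotin: "col A t \<notin> U" using notspan in_own_span[OF Ucar] by auto
    have li': "lin_indpt (U \<union> {col A t})"
      using lin_dep_iff_in_span[OF Ucar li vcar vnotin] notspan by auto
    define lab' where "lab' i = (if lab i = lab (b t) then lab (a t) else lab i)" for i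
    have img: "lab' ` {0..<n} = lab ` {0..<n} - {lab (b t)}"
    proof
      show "lab' ` {0..<n} \<subseteq> lab ` {0..<n} - {lab (b t)}"
        using False ab[OF tN] unfolding lab'_def by auto
      show "lab ` {0..<n} - {lab (b t)} \<subseteq> lab' ` {0..<n}"
      proof
        fix l assume "l \<in> lab ` {0..<n} - {lab (b t)}"
        then obtain i where "i < n" "l = lab i" "lab i \<noteq> lab (b t)" by auto
        then show "l \<in> lab' ` {0..<n}" unfolding lab'_def by (auto intro!: image_eqI[of _ _ i])
      qed
    qed
    have cimg: "card (lab' ` {0..<n}) + 1 = card (lab ` {0..<n})"
      unfolding img using ab[OF tN]
      by (subst card_Diff_singleton) (auto simp: Suc_le_eq card_gt_0_iff)
    have cU': "card (U \<union> {col A t}) = card U + 1" using finU vnotin by auto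
    show ?thesis
    proof (rule exI[of _ lab'], rule exI[of _ "U \<union> {col A t}"], intro conjI)
      show "U \<union> {col A t} \<subseteq> col A ` {0..<Suc t}" using U by auto
      show "lin_indpt (U \<union> {col A t})" by fact
      show "\<forall>x<Suc t. lab' (a x) = lab' (b x)"
        using lx False unfolding lab'_def by (auto simp: less_Suc_eq)
      show "card (U \<union> {col A t}) + card (lab' ` {0..<n}) = n" using cU' cimg cU by simp
    qed
  qed
qed

lemma incid_rank:
  fixes A :: "'a mat" and a b :: "nat \<Rightarrow> nat" and h N :: nat
  assumes A: "A \<in> carrier_mat n N"
  and colA: "\<And>x i. x < N \<Longrightarrow> i < n \<Longrightarrow> A $$ (i,x) = (if i = a x then 1 else 0) + (if i = b x then 1 else 0)"
  and ab: "\<And>x. x<N \<Longrightarrow> a x < h \<and> h \<le> b x \<and> b x < n"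
  shows "\<exists>lab::nat\<Rightarrow>nat. (\<forall>x<N. lab (a x) = lab (b x)) \<and> n \<le> rank A + card (lab ` {0..<n})"
proof -
  obtain lab :: "nat \<Rightarrow> nat" and U where U: "U \<subseteq> col A ` {0..<N}" and li: "lin_indpt U" and lx: "\<forall>x<N. lab (a x) = lab (b x)"
    and cU: "card U + card (lab ` {0..<n}) = n"
    using incid_invariant[OF A colA ab, of N] by auto
  have "U \<subseteq> set (cols A)" using U A by (auto simp: cols_def)
  then have "card U \<le> rank A" using rank_ge_card_indpt[OF A _ li] by auto
  then have "n \<le> rank A + card (lab ` {0..<n})" using cU by linarith
  then show ?thesis using lx by blast
qed

end

abbreviation hinv :: "('x \<Rightarrow> 'y) \<Rightarrow> 'y \<Rightarrow> 'x" where "hinv \<equiv> Hilbert_Choice.inv"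

lemma blockdiv: "(m::nat) > 0 \<Longrightarrow> (y \<in> {m*i..<m*(i+1)}) = (y div m = i)"
proof
  assume m: "m > 0" and y: "y \<in> {m*i..<m*(i+1)}"
  define r where "r = y - m*i"
  have "y = m*i + r" "r < m" using y unfolding r_def by auto
  then show "y div m = i" using m by simp
next
  assume m: "m > 0" and e: "y div m = i"
  have "m * (y div m) \<le> y" by simp
  moreover have "y < m + m * (y div m)" using dividend_less_times_div[OF m] .
  ultimately show "y \<in> {m*i..<m*(i+1)}" using e by auto
qed

lemma perm_block_mem:
  assumes m: "(m::nat) > 0" and p: "p permutes S"
  shows "(x \<in> p ` {m*i..<m*(i+1)}) = (hinv p x div m = i)"
proof -
  have "(x \<in> p ` {m*i..<m*(i+1)}) = (hinv p x \<in> {m*i..<m*(i+1)})"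
  proof
    assume "x \<in> p ` {m*i..<m*(i+1)}"
    then obtain y where "y \<in> {m*i..<m*(i+1)}" "x = p y" by auto
    then show "hinv p x \<in> {m*i..<m*(i+1)}" using permutes_inverses(2)[OF p] by simp
  next
    assume "hinv p x \<in> {m*i..<m*(i+1)}"
    moreover have "x = p (hinv p x)" using permutes_inverses(1)[OF p] by simp
    ultimately show "x \<in> p ` {m*i..<m*(i+1)}" by (metis imageI)
  qed
  then show ?thesis using blockdiv[OF m] by simp
qed

lemma inv_perm_lt:
  fixes N :: nat
  assumes p: "p permutes {0..<N}" and x: "x < N"
  shows "hinv p x < N"
proof -
  have "x \<in> {0..<N}" using x by simp
  then have "hinv p x \<in> {0..<N}" by (simp only: permutes_in_image[OF permutes_inv[OF p]])
  then show ?thesis by simp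
qed

lemma div_lt: "(m::nat) > 0 \<Longrightarrow> y < m*n \<Longrightarrow> y div m < n"
  by (simp add: less_mult_imp_div_less mult.commute)

lemma A_pair_carrier: "A_pair ty m n \<pi> \<pi>' \<in> carrier_mat (2*n) (m*n)"
  unfolding A_pair_def by simp

lemma A_pair_entry:
  fixes ty :: "'a::field itself"
  assumes m: "m > 0" and p: "\<pi> permutes {0..<m*n}" and p': "\<pi>' permutes {0..<m*n}"
    and x: "x < m*n" and i: "i < 2*n"
  shows "A_pair ty m n \<pi> \<pi>' $$ (i,x) = (if i = hinv \<pi> x div m then 1 else 0) + (if i = n + hinv \<pi>' x div m then (1::'a) else 0)"
proof -
  have a: "hinv \<pi> x div m < n" using div_lt[OF m inv_perm_lt[OF p x]] .
  show ?thesis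
  proof (cases "i < n")
    case True
    have "A_pair ty m n \<pi> \<pi>' $$ (i,x) = A_mat ty m n \<pi> $$ (i,x)" unfolding A_pair_def using i x True by simp
    also have "\<dots> = (if hinv \<pi> x div m = i then 1 else 0)"
      unfolding A_mat_def using True x perm_block_mem[OF m p] by simp
    finally show ?thesis using True by auto
  next
    case False
    have "A_pair ty m n \<pi> \<pi>' $$ (i,x) = A_mat ty m n \<pi>' $$ (i - n,x)" unfolding A_pair_def using i x False by simp
    also have "\<dots> = (if hinv \<pi>' x div m = i - n then 1 else 0)"
      unfolding A_mat_def using False i x perm_block_mem[OF m p'] by simp
    finally show ?thesis using False a by auto
  qed
qed

lemma defic_coloring:
  fixes ty :: "'a::field itself"
  assumes m: "m > 0" and p: "\<pi> permutes {0..<m*n}" and p': "\<pi>' permutes {0..<m*n}"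
    and d: "deficiency ty m n \<pi> \<pi>' \<ge> k" and k: "k \<ge> 1"
  shows "\<exists>\<sigma> \<in> {0..<n} \<rightarrow>\<^sub>E {0..<k}. \<sigma> ` {0..<n} = {0..<k} \<and>
           (\<exists>\<tau> \<in> {0..<n} \<rightarrow>\<^sub>E {0..<k}. \<forall>x<m*n. \<sigma> (hinv \<pi> x div m) = \<tau> (hinv \<pi>' x div m))"
proof -
  let ?A = "A_pair ty m n \<pi> \<pi>'"
  define a where "a x = hinv \<pi> x div m" for x
  define b where "b x = n + hinv \<pi>' x div m" for x
  have ab: "a x < n \<and> n \<le> b x \<and> b x < 2*n" if "x < m*n" for x
    using div_lt[OF m inv_perm_lt[OF p that]] div_lt[OF m inv_perm_lt[OF p' that]] unfolding a_def b_def by auto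
  obtain lab :: "nat \<Rightarrow> nat" where lx: "\<forall>x<m*n. lab (a x) = lab (b x)"
    and rk: "2*n \<le> vec_space.rank (2*n) ?A + card (lab ` {0..<2*n})"
    using vec_space.incid_rank[OF A_pair_carrier, where a = a and b = b and h = n] A_pair_entry[OF m p p'] ab
    unfolding a_def b_def by blast
  define L where "L = lab ` {0..<2*n}"
  have cL: "card L \<ge> k" using d rk unfolding deficiency_def L_def by linarith
  have finL: "finite L" unfolding L_def by simp
  have Ltop: "L = lab ` {0..<n}"
  proof
    show "lab ` {0..<n} \<subseteq> L" unfolding L_def by auto
    show "L \<subseteq> lab ` {0..<n}"
    proof
      fix l assume "l \<in> L"
      then obtain i where i: "i < 2*n" "l = lab i" unfolding L_def by auto
      show "l \<in> lab ` {0..<n}"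
      proof (cases "i < n")
        case True then show ?thesis using i by auto
      next
        case False
        define i' where "i' = i - n"
        have i': "i' < n" "i = n + i'" using i False unfolding i'_def by auto
        define x where "x = \<pi>' (m * i')"
        have mi: "m * i' < m * n" using i' m by simp
        have xlt: "x < m*n" unfolding x_def using permutes_in_image[OF p', of "m*i'"] mi by simp
        have "hinv \<pi>' x = m * i'" unfolding x_def using permutes_inverses(2)[OF p'] by simp
        then have "b x = i" unfolding b_def using i' m by simp
        then have "l = lab (a x)" using lx xlt i by simp
        then show ?thesis using ab[OF xlt] by auto
      qed
    qed
  qed
  obtain e where e: "bij_betw e L {0..<card L}" using ex_bij_betw_finite_nat[OF finL] by blast
  define hh where "hh l = min (e l) (k - 1)" for l
  define \<sigma> where "\<sigma> = restrict (\<lambda>i. hh (lab i)) {0..<n}"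
  define \<tau> where "\<tau> = restrict (\<lambda>i. hh (lab (n + i))) {0..<n}"
  have hhk: "hh l < k" for l unfolding hh_def using k by auto
  have s1: "\<sigma> \<in> {0..<n} \<rightarrow>\<^sub>E {0..<k}" unfolding \<sigma>_def using hhk by auto
  have t1: "\<tau> \<in> {0..<n} \<rightarrow>\<^sub>E {0..<k}" unfolding \<tau>_def using hhk by auto
  have s2: "\<sigma> ` {0..<n} = {0..<k}"
  proof
    show "\<sigma> ` {0..<n} \<subseteq> {0..<k}" using s1 by auto
    show "{0..<k} \<subseteq> \<sigma> ` {0..<n}"
    proof
      fix j assume j: "j \<in> {0..<k}"
      then have "j \<in> {0..<card L}" using cL by auto
      then obtain l where l: "l \<in> L" "e l = j" using e by (metis bij_betw_def imageE)
      then obtain i where i: "i < n" "l = lab i" using Ltop by auto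
      have "\<sigma> i = j" unfolding \<sigma>_def hh_def using i l j by auto
      then show "j \<in> \<sigma> ` {0..<n}" using i by auto
    qed
  qed
  have s3: "\<forall>x<m*n. \<sigma> (hinv \<pi> x div m) = \<tau> (hinv \<pi>' x div m)"
  proof (intro allI impI)
    fix x assume x: "x < m*n"
    have "a x < n" "b x - n < n" "b x = n + (b x - n)" using ab[OF x] by auto
    then show "\<sigma> (hinv \<pi> x div m) = \<tau> (hinv \<pi>' x div m)"
      using lx x unfolding \<sigma>_def \<tau>_def a_def b_def by auto
  qed
  show ?thesis using s1 s2 s3 t1 by blast
qed

definition pset :: "'x set \<Rightarrow> ('x \<Rightarrow> 'l) \<Rightarrow> ('x \<Rightarrow> 'l) \<Rightarrow> ('x \<Rightarrow> 'x) set" where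
  "pset S c d = {\<rho>. \<rho> permutes S \<and> (\<forall>y\<in>S. d (\<rho> y) = c y)}"

lemma finite_pset: "finite S \<Longrightarrow> finite (pset S c d)"
  unfolding pset_def by (rule finite_subset[OF _ finite_permutations[of S]]) auto

lemma pset_fib:
  assumes "\<rho> \<in> pset S c d"
  shows "card {y\<in>S. c y = l} = card {y\<in>S. d y = l}"
proof -
  have p: "\<rho> permutes S" and h: "\<forall>y\<in>S. d (\<rho> y) = c y" using assms by (auto simp: pset_def)
  have "\<rho> ` {y\<in>S. c y = l} = {y\<in>S. d y = l}"
  proof
    show "\<rho> ` {y\<in>S. c y = l} \<subseteq> {y\<in>S. d y = l}" using h p by (auto simp: permutes_in_image)
    show "{y\<in>S. d y = l} \<subseteq> \<rho> ` {y\<in>S. c y = l}"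
    proof
      fix z assume z: "z \<in> {y\<in>S. d y = l}"
      have zS: "z \<in> S" using z by auto
      define y where "y = hinv \<rho> z"
      have y: "y \<in> S" "\<rho> y = z"
        using permutes_inv[OF p] zS permutes_inverses(1)[OF p] by (auto simp: y_def permutes_in_image)
      then have "c y = l" using h z by auto
      then show "z \<in> \<rho> ` {y\<in>S. c y = l}" using y by auto
    qed
  qed
  moreover have "card (\<rho> ` {y\<in>S. c y = l}) = card {y\<in>S. c y = l}"
    by (rule card_image[OF permutes_inj_on[OF p]])
  ultimately show ?thesis by simp
qed

lemma card_pset:
  assumes "finite S" "finite L" "c ` S \<subseteq> L" "d ` S \<subseteq> L"
    "\<forall>l\<in>L. card {y\<in>S. c y = l} = card {y\<in>S. d y = l}"
  shows "card (pset S c d) = (\<Prod>l\<in>L. fact (card {y\<in>S. c y = l}))"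
  using assms(1,3-5)
proof (induction S arbitrary: d rule: finite_induct)
  case empty
  have "pset {} c d = {id}" by (auto simp: pset_def)
  then show ?case by simp
next
  case (insert a S)
  let ?S' = "insert a S"
  define B where "B = {b\<in>?S'. d b = c a}"
  define g where "g = (\<lambda>(b,p::'a\<Rightarrow>'a). Transposition.transpose a b \<circ> p)"
  define Sig where "Sig = Sigma B (\<lambda>b. pset S c (d \<circ> Transposition.transpose a b))"
  have caL: "c a \<in> L" using insert by auto
  have fibS: "card {y\<in>S. c y = l} = card {y\<in>?S'. c y = l} - (if c a = l then 1 else 0)" for l
  proof -
    have "{y\<in>?S'. c y = l} = (if c a = l then insert a {y\<in>S. c y = l} else {y\<in>S. c y = l})" by auto
    then show ?thesis using insert by auto
  qed
  have fibT: "card {y\<in>S. (d \<circ> Transposition.transpose a b) y = l} = card {y\<in>?S'. d y = l} - (if d b = l then 1 else 0)"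
    if b: "b \<in> ?S'" for b l
  proof -
    let ?t = "Transposition.transpose a b"
    have "?t ` {y\<in>S. (d \<circ> ?t) y = l} = {z\<in>?S' - {b}. d z = l}"
    proof
      show "?t ` {y\<in>S. (d \<circ> ?t) y = l} \<subseteq> {z\<in>?S' - {b}. d z = l}"
        using b insert.hyps by (auto simp: transpose_def)
      show "{z\<in>?S' - {b}. d z = l} \<subseteq> ?t ` {y\<in>S. (d \<circ> ?t) y = l}"
      proof
        fix z assume z: "z \<in> {z\<in>?S' - {b}. d z = l}"
        have "?t z \<in> S" using z b by (auto simp: transpose_def)
        moreover have "?t (?t z) = z" by simp
        ultimately show "z \<in> ?t ` {y\<in>S. (d \<circ> ?t) y = l}" using z by (metis (mono_tags, lifting) comp_apply image_eqI mem_Collect_eq)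
      qed
    qed
    then have "card {y\<in>S. (d \<circ> ?t) y = l} = card {z\<in>?S' - {b}. d z = l}"
      by (metis (no_types, lifting) card_image inj_on_transpose)
    also have "\<dots> = card {y\<in>?S'. d y = l} - (if d b = l then 1 else 0)"
    proof -
      have "{z\<in>?S' - {b}. d z = l} = {y\<in>?S'. d y = l} - (if d b = l then {b} else {})" by auto
      then show ?thesis using b insert.hyps by (auto simp: card_Diff_singleton)
    qed
    finally show ?thesis .
  qed
  have IH: "card (pset S c (d \<circ> Transposition.transpose a b)) = (\<Prod>l\<in>L. fact (card {y\<in>S. c y = l}))"
    if b: "b \<in> B" for b
  proof (rule insert.IH)
    show "c ` S \<subseteq> L" using insert by auto
    show "(d \<circ> Transposition.transpose a b) ` S \<subseteq> L"
    proof
      fix z assume "z \<in> (d \<circ> Transposition.transpose a b) ` S"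
      then obtain y where "y \<in> S" "z = d (Transposition.transpose a b y)" by auto
      moreover have "Transposition.transpose a b y \<in> ?S'" using \<open>y \<in> S\<close> b by (auto simp: B_def transpose_def)
      ultimately show "z \<in> L" using insert.prems(2) by auto
    qed
    show "\<forall>l\<in>L. card {y \<in> S. c y = l} = card {y \<in> S. (d \<circ> Transposition.transpose a b) y = l}"
      using fibS fibT[of b] b insert.prems(3) by (auto simp: B_def)
  qed
  have eq: "pset ?S' c d = g ` Sig"
  proof
    show "pset ?S' c d \<subseteq> g ` Sig"
    proof
      fix \<rho> assume r: "\<rho> \<in> pset ?S' c d"
      then have rp: "\<rho> permutes ?S'" and rh: "\<forall>y\<in>?S'. d (\<rho> y) = c y" by (auto simp: pset_def)
      define b where "b = \<rho> a"
      define p where "p = Transposition.transpose a b \<circ> \<rho>"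
      have bS: "b \<in> ?S'" unfolding b_def using rp by (metis insertI1 permutes_in_image)
      have pp: "p permutes S" unfolding p_def b_def by (rule permutes_insert_lemma[OF rp])
      have "p \<in> pset S c (d \<circ> Transposition.transpose a b)"
        using pp rh unfolding pset_def p_def by auto
      moreover have "b \<in> B" using bS rh unfolding B_def b_def by auto
      moreover have "\<rho> = g (b, p)" unfolding g_def p_def by (auto simp: fun_eq_iff)
      ultimately show "\<rho> \<in> g ` Sig" unfolding Sig_def by auto
    qed
    show "g ` Sig \<subseteq> pset ?S' c d"
    proof
      fix r assume "r \<in> g ` Sig"
      then obtain b p where b: "b \<in> B" and p: "p \<in> pset S c (d \<circ> Transposition.transpose a b)"
        and r: "r = Transposition.transpose a b \<circ> p"
        unfolding Sig_def g_def by auto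
      have pp: "p permutes S" and ph: "\<forall>y\<in>S. d (Transposition.transpose a b (p (Transposition.transpose a b (Transposition.transpose a b y)))) = c y"
        using p by (auto simp: pset_def)
      have pa: "p a = a" using pp insert.hyps by (simp add: permutes_not_in)
      have pS': "p permutes ?S'" using pp by (auto intro: permutes_subset)
      have "r permutes ?S'" unfolding r
        by (rule permutes_compose[OF pS' permutes_swap_id]) (use b in \<open>auto simp: B_def\<close>)
      moreover have "\<forall>y\<in>?S'. d (r y) = c y"
        using p b pa unfolding r by (auto simp: pset_def B_def)
      ultimately show "r \<in> pset ?S' c d" by (auto simp: pset_def)
    qed
  qed
  have ginj: "inj_on g Sig"
  proof (rule inj_onI)
    fix x y assume x: "x \<in> Sig" and y: "y \<in> Sig" and e: "g x = g y"
    obtain b p where xbp: "x = (b,p)" "p permutes S" using x unfolding Sig_def pset_def by auto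
    obtain b' p' where ybp: "y = (b',p')" "p' permutes S" using y unfolding Sig_def pset_def by auto
    have "p a = a" "p' a = a" using xbp ybp insert.hyps by (auto simp: permutes_not_in)
    then have "b = b'" using fun_cong[OF e, of a] unfolding xbp ybp g_def by simp
    then have "Transposition.transpose a b \<circ> p = Transposition.transpose a b \<circ> p'"
      using e unfolding xbp ybp g_def by simp
    then have "Transposition.transpose a b \<circ> (Transposition.transpose a b \<circ> p) = Transposition.transpose a b \<circ> (Transposition.transpose a b \<circ> p')"
      by simp
    then have "p = p'" by (simp add: o_assoc)
    then show "x = y" using xbp ybp \<open>b = b'\<close> by simp
  qed
  have finB: "finite B" unfolding B_def using insert by auto
  have "card (pset ?S' c d) = card Sig" unfolding eq by (rule card_image[OF ginj])
  also have "\<dots> = (\<Sum>b\<in>B. card (pset S c (d \<circ> Transposition.transpose a b)))"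
    unfolding Sig_def by (rule card_SigmaI[OF finB]) (auto intro: finite_pset insert.hyps)
  also have "\<dots> = card B * (\<Prod>l\<in>L. fact (card {y\<in>S. c y = l}))" using IH by simp
  also have "card B = card {y\<in>S. c y = c a} + 1"
  proof -
    have "card B = card {y\<in>?S'. c y = c a}" unfolding B_def using insert.prems(3) caL by auto
    also have "\<dots> = card {y\<in>S. c y = c a} + 1"
    proof -
      have "{y\<in>?S'. c y = c a} = insert a {y\<in>S. c y = c a}" by auto
      then show ?thesis using insert.hyps by simp
    qed
    finally show ?thesis .
  qed
  also have "(card {y\<in>S. c y = c a} + 1) * (\<Prod>l\<in>L. fact (card {y\<in>S. c y = l})) = (\<Prod>l\<in>L. fact (card {y\<in>?S'. c y = l}))"
  proof -
    have fa: "card {y\<in>?S'. c y = c a} = card {y\<in>S. c y = c a} + 1"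
    proof -
      have "{y\<in>?S'. c y = c a} = insert a {y\<in>S. c y = c a}" by auto
      then show ?thesis using insert.hyps by simp
    qed
    have fo: "card {y\<in>?S'. c y = l} = card {y\<in>S. c y = l}" if "l \<noteq> c a" for l
    proof -
      have "{y\<in>?S'. c y = l} = {y\<in>S. c y = l}" using that by auto
      then show ?thesis by simp
    qed
    define f where "f = card {y\<in>S. c y = c a}"
    define P :: nat where "P = (\<Prod>l\<in>L-{c a}. fact (card {y\<in>S. c y = l})) "
    have X: "(\<Prod>l\<in>L. fact (card {y\<in>?S'. c y = l})) = fact (f+1) * P"
    proof -
      have "(\<Prod>l\<in>L. fact (card {y\<in>?S'. c y = l})) = fact (card {y\<in>?S'. c y = c a}) * (\<Prod>l\<in>L-{c a}. fact (card {y\<in>?S'. c y = l}))"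
        using caL assms(2) by (simp add: prod.remove)
      also have "(\<Prod>l\<in>L-{c a}. fact (card {y\<in>?S'. c y = l})) = P"
        unfolding P_def using fo by (intro prod.cong) auto
      finally show ?thesis unfolding fa f_def .
    qed
    have Y: "(\<Prod>l\<in>L. fact (card {y\<in>S. c y = l})) = fact f * P"
      unfolding f_def P_def using caL assms(2) by (simp add: prod.remove)
    have Z: "(f + 1) * (fact f * P) = (fact (f+1) :: nat) * P" by (simp add: algebra_simps)
    show ?thesis apply (subst X) apply (subst Y) using Z by (simp only: f_def)
  qed
  finally show ?case .
qed

lemma card_pset_le:
  assumes "finite S" "finite L" "c ` S \<subseteq> L" "d ` S \<subseteq> L"
  shows "card (pset S c d) \<le> (if (\<forall>l\<in>L. card {y\<in>S. c y = l} = card {y\<in>S. d y = l}) then (\<Prod>l\<in>L. fact (card {y\<in>S. c y = l})) else 0)"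
proof (cases "\<forall>l\<in>L. card {y\<in>S. c y = l} = card {y\<in>S. d y = l}")
  case True
  then show ?thesis using card_pset[OF assms True] by simp
next
  case False
  have "pset S c d = {}"
  proof (rule equals0I)
    fix \<rho> assume "\<rho> \<in> pset S c d"
    then have "\<forall>l. card {y \<in> S. c y = l} = card {y \<in> S. d y = l}" by (intro allI) (rule pset_fib)
    then show False using False by blast
  qed
  then show ?thesis by simp
qed

lemma card_blocks:
  fixes m n :: nat
  assumes m: "m > 0"
  shows "card {y\<in>{0..<m*n}. P (y mod m) (y div m)} = (\<Sum>j<m. card {i\<in>{0..<n}. P j i})"
proof -
  let ?h = "\<lambda>(j,i). i*m + j"
  let ?Sig = "SIGMA j:{..<m}. {i\<in>{0..<n}. P j i}"
  have img: "{y\<in>{0..<m*n}. P (y mod m) (y div m)} = ?h ` ?Sig"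
  proof
    show "{y\<in>{0..<m*n}. P (y mod m) (y div m)} \<subseteq> ?h ` ?Sig"
    proof
      fix y assume y: "y \<in> {y\<in>{0..<m*n}. P (y mod m) (y div m)}"
      have "y div m < n" using y m by (auto simp: less_mult_imp_div_less mult.commute)
      moreover have "y mod m < m" using m by simp
      moreover have "y = ?h (y mod m, y div m)" by simp
      ultimately show "y \<in> ?h ` ?Sig" using y by (intro image_eqI[of _ _ "(y mod m, y div m)"]) auto
    qed
    show "?h ` ?Sig \<subseteq> {y\<in>{0..<m*n}. P (y mod m) (y div m)}"
    proof
      fix y assume "y \<in> ?h ` ?Sig"
      then obtain j i where ji: "j < m" "i < n" "P j i" "y = i*m + j" by auto
      have "i*m + j < m*n"
      proof -
        have "i*m + j < i*m + m" using ji by simp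
        also have "\<dots> = (i+1)*m" by simp
        also have "\<dots> \<le> n*m" using ji by (intro mult_right_mono) auto
        finally show ?thesis by (simp add: mult.commute)
      qed
      moreover have "(i*m+j) mod m = j" "(i*m+j) div m = i" using ji m by auto
      ultimately show "y \<in> {y\<in>{0..<m*n}. P (y mod m) (y div m)}" using ji by auto
    qed
  qed
  have inj: "inj_on ?h ?Sig"
  proof (rule inj_onI)
    fix x z assume xz: "x \<in> ?Sig" "z \<in> ?Sig" "?h x = ?h z"
    obtain j i where x: "x = (j,i)" "j < m" using xz by auto
    obtain j' i' where z: "z = (j',i')" "j' < m" using xz by auto
    have e: "i*m+j = i'*m+j'" using xz x z by simp
    have 1: "j = (i*m+j) mod m" "i = (i*m+j) div m" using x by auto
    have 2: "j' = (i'*m+j') mod m" "i' = (i'*m+j') div m" using z by auto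
    show "x = z" using 1 2 e x z by metis
  qed
  show ?thesis unfolding img card_image[OF inj] by (subst card_SigmaI) auto
qed

lemma card_blocks_const:
  fixes m n :: nat
  assumes m: "m > 0"
  shows "card {y\<in>{0..<m*n}. f (y div m) = l} = m * card {i\<in>{0..<n}. f i = l}"
  using card_blocks[OF m, where P = "\<lambda>j i. f i = l" and n = n] by simp

definition colset :: "'x set \<Rightarrow> 'l set \<Rightarrow> ('x \<Rightarrow> 'l) \<Rightarrow> ('x \<Rightarrow> 'l) set" where
  "colset S L e0 = {e \<in> S \<rightarrow>\<^sub>E L. \<forall>l\<in>L. card {y\<in>S. e y = l} = card {y\<in>S. e0 y = l}}"

lemma card_colset:
  assumes S: "finite S" and L: "finite L" and e0: "e0 \<in> S \<rightarrow>\<^sub>E L"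
  shows "card (colset S L e0) * (\<Prod>l\<in>L. fact (card {y\<in>S. e0 y = l})) = fact (card S)"
proof -
  let ?C = "colset S L e0"
  have finC: "finite ?C"
  proof (rule finite_subset)
    show "?C \<subseteq> S \<rightarrow>\<^sub>E L" unfolding colset_def by blast
    show "finite (S \<rightarrow>\<^sub>E L)" using S L by (intro finite_PiE) auto
  qed
  have U: "{\<rho>. \<rho> permutes S} = (\<Union>e\<in>?C. pset S e e0)"
  proof
    show "{\<rho>. \<rho> permutes S} \<subseteq> (\<Union>e\<in>?C. pset S e e0)"
    proof
      fix \<rho> assume r: "\<rho> \<in> {\<rho>. \<rho> permutes S}"
      define e where "e = restrict (e0 \<circ> \<rho>) S"
      have rS: "\<forall>y\<in>S. \<rho> y \<in> S" using r by (auto simp: permutes_in_image)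
      have p: "\<rho> \<in> pset S e e0" using r unfolding pset_def e_def by auto
      have "e \<in> S \<rightarrow>\<^sub>E L" using rS e0 unfolding e_def by auto
      moreover have "\<forall>l\<in>L. card {y\<in>S. e y = l} = card {y\<in>S. e0 y = l}" using pset_fib[OF p] by auto
      ultimately show "\<rho> \<in> (\<Union>e\<in>?C. pset S e e0)" using p unfolding colset_def by auto
    qed
    show "(\<Union>e\<in>?C. pset S e e0) \<subseteq> {\<rho>. \<rho> permutes S}" unfolding pset_def by auto
  qed
  have disj: "\<forall>e\<in>?C. \<forall>e'\<in>?C. e \<noteq> e' \<longrightarrow> pset S e e0 \<inter> pset S e' e0 = {}"
  proof (intro ballI impI)
    fix e e' assume e: "e \<in> ?C" and e': "e' \<in> ?C" and ne: "e \<noteq> e'"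
    show "pset S e e0 \<inter> pset S e' e0 = {}"
    proof (rule equals0I)
      fix \<rho> assume "\<rho> \<in> pset S e e0 \<inter> pset S e' e0"
      then have "\<forall>y\<in>S. e y = e' y" unfolding pset_def by auto
      moreover have "e \<in> S \<rightarrow>\<^sub>E L" "e' \<in> S \<rightarrow>\<^sub>E L" using e e' unfolding colset_def by auto
      ultimately have "e = e'" by (metis PiE_ext)
      then show False using ne by simp
    qed
  qed
  have each: "card (pset S e e0) = (\<Prod>l\<in>L. fact (card {y\<in>S. e0 y = l}))" if e: "e \<in> ?C" for e
  proof -
    have eP: "e \<in> S \<rightarrow>\<^sub>E L" and fe: "\<forall>l\<in>L. card {y\<in>S. e y = l} = card {y\<in>S. e0 y = l}"
      using e unfolding colset_def by auto
    have "card (pset S e e0) = (\<Prod>l\<in>L. fact (card {y\<in>S. e y = l}))"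
      by (rule card_pset[OF S L]) (use eP e0 fe in auto)
    also have "\<dots> = (\<Prod>l\<in>L. fact (card {y\<in>S. e0 y = l}))" using fe by (intro prod.cong) auto
    finally show ?thesis .
  qed
  have "fact (card S) = card {\<rho>. \<rho> permutes S}" by (rule card_permutations[symmetric, OF refl S])
  also have "\<dots> = (\<Sum>e\<in>?C. card (pset S e e0))"
    unfolding U by (rule card_UN_disjoint[OF finC]) (use S finite_pset disj in auto)
  also have "\<dots> = card ?C * (\<Prod>l\<in>L. fact (card {y\<in>S. e0 y = l}))" using each by simp
  finally show ?thesis by simp
qed

lemma colset_self: "e0 \<in> S \<rightarrow>\<^sub>E L \<Longrightarrow> e0 \<in> colset S L e0"
  unfolding colset_def by auto

lemma colset_power:
  fixes m n k :: nat and \<sigma> :: "nat \<Rightarrow> nat"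
  assumes m: "m > 0" and \<sigma>: "\<sigma> \<in> {0..<n} \<rightarrow>\<^sub>E {0..<k}"
  shows "card (colset {0..<n} {0..<k} \<sigma>) ^ m \<le> card (colset {0..<m*n} {0..<k} (restrict (\<lambda>y. \<sigma> (y div m)) {0..<m*n}))"
proof -
  let ?C = "colset {0..<n} {0..<k} \<sigma>"
  let ?e0 = "restrict (\<lambda>y. \<sigma> (y div m)) {0..<m*n}"
  let ?D = "colset {0..<m*n} {0..<k} ?e0"
  let ?F = "\<lambda>F. restrict (\<lambda>y. F (y mod m) (y div m)) {0..<m*n}"
  have divn: "y div m < n" if "y < m*n" for y using that m by (auto simp: less_mult_imp_div_less mult.commute)
  have finD: "finite ?D"
  proof (rule finite_subset)
    show "?D \<subseteq> {0..<m*n} \<rightarrow>\<^sub>E {0..<k}" unfolding colset_def by blast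
    show "finite ({0..<m*n} \<rightarrow>\<^sub>E {0..<k})" by (intro finite_PiE) auto
  qed
  have fe0: "card {y\<in>{0..<m*n}. ?e0 y = l} = m * card {i\<in>{0..<n}. \<sigma> i = l}" for l
  proof -
    have "{y\<in>{0..<m*n}. ?e0 y = l} = {y\<in>{0..<m*n}. \<sigma> (y div m) = l}" by auto
    then show ?thesis using card_blocks_const[OF m, where f = "\<sigma>" and l = l and n = n] by simp
  qed
  have eq1: "card (PiE {..<m} (\<lambda>_. ?C)) = card ?C ^ m" by (simp add: card_PiE)
  have eq2: "card (PiE {..<m} (\<lambda>_. ?C)) = card (?F ` PiE {..<m} (\<lambda>_. ?C))"
  proof (rule card_image[symmetric], rule inj_onI)
    fix F G assume F: "F \<in> PiE {..<m} (\<lambda>_. ?C)" and G: "G \<in> PiE {..<m} (\<lambda>_. ?C)" and e: "?F F = ?F G"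
    show "F = G"
    proof (rule PiE_ext[OF F G])
      fix j assume j: "j \<in> {..<m}"
      have Fj: "F j \<in> {0..<n} \<rightarrow>\<^sub>E {0..<k}" "G j \<in> {0..<n} \<rightarrow>\<^sub>E {0..<k}" using F G j unfolding colset_def by auto
      show "F j = G j"
      proof (rule PiE_ext[OF Fj])
        fix i assume i: "i \<in> {0..<n}"
        have lt: "i*m + j < m*n"
        proof -
          have "i*m + j < i*m + m" using j by simp
          also have "\<dots> = (i+1)*m" by simp
          also have "\<dots> \<le> n*m" using i by (intro mult_right_mono) auto
          finally show ?thesis by (simp add: mult.commute)
        qed
        have "?F F (i*m+j) = ?F G (i*m+j)" using e by simp
        then show "F j i = G j i" using lt j by simp
      qed
    qed
  qed
  have le: "card (?F ` PiE {..<m} (\<lambda>_. ?C)) \<le> card ?D"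
  proof (rule card_mono[OF finD], rule subsetI)
    fix e assume "e \<in> ?F ` PiE {..<m} (\<lambda>_. ?C)"
    then obtain F where F: "F \<in> PiE {..<m} (\<lambda>_. ?C)" and eF: "e = ?F F" by auto
    have FC: "F j \<in> ?C" if "j < m" for j using F that by auto
    have "e \<in> {0..<m*n} \<rightarrow>\<^sub>E {0..<k}"
    proof -
      have "F (y mod m) (y div m) \<in> {0..<k}" if "y < m*n" for y
        using FC[of "y mod m"] m divn[OF that] unfolding colset_def by auto
      then show ?thesis unfolding eF by auto
    qed
    moreover have "card {y\<in>{0..<m*n}. e y = l} = card {y\<in>{0..<m*n}. ?e0 y = l}" if l: "l \<in> {0..<k}" for l
    proof -
      have "{y\<in>{0..<m*n}. e y = l} = {y\<in>{0..<m*n}. F (y mod m) (y div m) = l}" unfolding eF by auto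
      then have "card {y\<in>{0..<m*n}. e y = l} = (\<Sum>j<m. card {i\<in>{0..<n}. F j i = l})"
        using card_blocks[OF m, where P = "\<lambda>j i. F j i = l" and n = n] by simp
      also have "\<dots> = (\<Sum>j<m. card {i\<in>{0..<n}. \<sigma> i = l})"
        using FC l unfolding colset_def by (intro sum.cong) auto
      also have "\<dots> = m * card {i\<in>{0..<n}. \<sigma> i = l}" by simp
      finally show ?thesis using fe0 by simp
    qed
    ultimately show "e \<in> ?D" unfolding colset_def by auto
  qed
  show ?thesis using eq1 eq2 le by simp
qed

lemma fact_mult_le:
  fixes a b :: nat
  assumes "a \<ge> 1" "b \<ge> 1"
  shows "fact a * fact b \<le> (fact (a + b - 1) :: nat)"
  using assms(2)
proof (induction b)
  case 0
  then show ?case by simp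
next
  case (Suc b)
  show ?case
  proof (cases "b = 0")
    case True
    then show ?thesis using assms by simp
  next
    case False
    then have IH: "fact a * fact b \<le> (fact (a + b - 1) :: nat)" using Suc by simp
    have "fact a * fact (Suc b) = Suc b * (fact a * fact b)" by (simp add: algebra_simps)
    also have "\<dots> \<le> Suc b * fact (a + b - 1)" by (rule mult_le_mono2[OF IH])
    also have "\<dots> \<le> (a + b) * fact (a + b - 1)" using assms by (intro mult_right_mono) auto
    also have "\<dots> = fact (a + Suc b - 1)"
    proof -
      obtain c where c: "a + b = Suc c" using assms by (cases "a+b") auto
      have "a + Suc b - 1 = Suc c" using c by simp
      moreover have "a + b - 1 = c" using c by simp
      ultimately show ?thesis using c by simp
    qed
    finally show ?thesis .
  qed
qed

lemma prod_fact_le: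
  fixes s :: "'l \<Rightarrow> nat"
  assumes "finite L" "L \<noteq> {}" "\<forall>l\<in>L. s l \<ge> 1"
  shows "(\<Prod>l\<in>L. fact (s l)) \<le> (fact (sum s L + 1 - card L) :: nat)"
  using assms
proof (induction L rule: finite_ne_induct)
  case (singleton x)
  then show ?case by simp
next
  case (insert x F)
  have "card F = (\<Sum>l\<in>F. 1)" by simp
  also have "\<dots> \<le> sum s F" using insert.prems by (intro sum_mono) auto
  finally have sF: "sum s F \<ge> card F" .
  have "(\<Prod>l\<in>insert x F. fact (s l)) = (fact (s x) * (\<Prod>l\<in>F. fact (s l)) :: nat)" using insert by simp
  also have "\<dots> \<le> fact (s x) * fact (sum s F + 1 - card F)"
  proof -
    have "(\<Prod>l\<in>F. fact (s l)) \<le> (fact (sum s F + 1 - card F) :: nat)" using insert.IH insert.prems by simp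
    then show ?thesis by (rule mult_le_mono2)
  qed
  also have "\<dots> \<le> fact (s x + (sum s F + 1 - card F) - 1)"
    by (rule fact_mult_le) (use insert.prems sF in auto)
  also have "s x + (sum s F + 1 - card F) - 1 = sum s (insert x F) + 1 - card (insert x F)"
    using insert sF by simp
  finally show ?case .
qed

lemma fact_falling:
  fixes n j :: nat
  assumes "j \<le> n"
  shows "fact (n - j) * (\<Prod>i<j. n - i) = (fact n :: nat)"
  using assms
proof (induction j)
  case 0
  then show ?case by simp
next
  case (Suc j)
  have e: "n - j = Suc (n - Suc j)" using Suc.prems by simp
  have "fact (n - j) = (n - j) * (fact (n - Suc j) :: nat)" unfolding e by simp
  then have "fact (n - Suc j) * (\<Prod>i<Suc j. n - i) = fact (n - j) * (\<Prod>i<j. n - i)"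
    by (simp add: algebra_simps)
  then show ?case using Suc by simp
qed

lemma falling_sq:
  fixes n j :: nat
  assumes "j < n"
  shows "n ^ j \<le> (\<Prod>i<j. n - i) ^ 2"
proof -
  have "(\<Prod>i<j. n - i) = (\<Prod>i<j. n - (j - Suc i))"
    by (rule prod.nat_diff_reindex[where g="\<lambda>i. n - i", symmetric])
  then have "(\<Prod>i<j. n - i) ^ 2 = (\<Prod>i<j. (n - i) * (n - (j - Suc i)))"
    by (simp add: power2_eq_square prod.distrib)
  also have "(\<Prod>i<j. n) \<le> \<dots>"
  proof (rule prod_mono)
    fix i assume "i \<in> {..<j}"
    then have i: "i < j" by simp
    define x where "x = n - i"
    define y where "y = n - (j - Suc i)"
    have x2: "x \<ge> 2" and y2: "y \<ge> 2" and xy: "x + y \<ge> n + 2" using i assms unfolding x_def y_def by auto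
    have e1: "x * y = x * (y - 1) + x" using y2 by (cases y) (auto simp: algebra_simps)
    have e2: "x * (y - 1) \<ge> 2 * (y - 1)" using x2 by (intro mult_right_mono) auto
    have "n \<le> x * y" using e1 e2 xy y2 by linarith
    then show "0 \<le> n \<and> n \<le> (n - i) * (n - (j - Suc i))" unfolding x_def y_def by simp
  qed
  finally show ?thesis by simp
qed

definition SurjS :: "nat \<Rightarrow> nat \<Rightarrow> (nat \<Rightarrow> nat) set" where
  "SurjS n k = {\<sigma> \<in> {0..<n} \<rightarrow>\<^sub>E {0..<k}. \<sigma> ` {0..<n} = {0..<k}}"

definition fibv :: "nat \<Rightarrow> nat \<Rightarrow> (nat \<Rightarrow> nat) \<Rightarrow> nat \<Rightarrow> nat" where
  "fibv n k \<sigma> = restrict (\<lambda>l. card {i\<in>{0..<n}. \<sigma> i = l}) {0..<k}"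

definition consS :: "nat \<Rightarrow> nat \<Rightarrow> (nat \<Rightarrow> nat) \<Rightarrow> (nat \<Rightarrow> nat) \<Rightarrow> ((nat \<Rightarrow> nat) \<times> (nat \<Rightarrow> nat)) set" where
  "consS m n \<sigma> \<tau> = {(\<pi>,\<pi>'). \<pi> permutes {0..<m*n} \<and> \<pi>' permutes {0..<m*n} \<and>
      (\<forall>x<m*n. \<sigma> (hinv \<pi> x div m) = \<tau> (hinv \<pi>' x div m))}"

lemma fib_inv_perm:
  assumes p: "p permutes S"
  shows "card {x\<in>S. f (hinv p x) = l} = card {y\<in>S. f y = l}"
proof -
  have "hinv p \<in> pset S (\<lambda>x. f (hinv p x)) f" unfolding pset_def using permutes_inv[OF p] by auto
  from pset_fib[OF this] show ?thesis .
qed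

lemma cons_bound:
  fixes m n k :: nat
  assumes m: "m > 0" and \<sigma>: "\<sigma> \<in> {0..<n} \<rightarrow>\<^sub>E {0..<k}" and \<tau>: "\<tau> \<in> {0..<n} \<rightarrow>\<^sub>E {0..<k}"
  shows "card (consS m n \<sigma> \<tau>) \<le> (if \<tau> \<in> colset {0..<n} {0..<k} \<sigma>
            then fact (m*n) * (\<Prod>l\<in>{0..<k}. fact (m * card {i\<in>{0..<n}. \<sigma> i = l})) else 0)"
proof -
  let ?N = "m*n"
  let ?P = "{\<pi>. \<pi> permutes {0..<?N}}"
  define Q where "Q \<pi> = {\<pi>'. \<pi>' permutes {0..<?N} \<and> (\<forall>x<?N. \<sigma> (hinv \<pi> x div m) = \<tau> (hinv \<pi>' x div m))}" for \<pi>
  define R where "R = (if \<tau> \<in> colset {0..<n} {0..<k} \<sigma>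
            then (\<Prod>l\<in>{0..<k}. fact (m * card {i\<in>{0..<n}. \<sigma> i = l})) else (0::nat))"
  have finP: "finite ?P" by (rule finite_permutations) simp
  have finQ: "finite (Q \<pi>)" for \<pi> unfolding Q_def by (rule finite_subset[OF _ finite_permutations[of "{0..<?N}"]]) auto
  have eq: "consS m n \<sigma> \<tau> = Sigma ?P Q" unfolding consS_def Q_def by auto
  have each: "card (Q \<pi>) \<le> R" if p: "\<pi> \<in> ?P" for \<pi>
  proof -
    have pp: "\<pi> permutes {0..<?N}" using p by simp
    define c where "c x = \<sigma> (hinv \<pi> x div m)" for x
    define d where "d y = \<tau> (y div m)" for y
    have inj: "inj_on hinv (Q \<pi>)"
    proof (rule inj_onI)
      fix a b assume "a \<in> Q \<pi>" "b \<in> Q \<pi>" "hinv a = hinv b"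
      then show "a = b" unfolding Q_def by (metis (no_types, lifting) mem_Collect_eq permutes_inv_inv)
    qed
    have sub: "hinv ` Q \<pi> \<subseteq> pset {0..<?N} c d"
    proof
      fix r assume "r \<in> hinv ` Q \<pi>"
      then obtain p' where p': "p' \<in> Q \<pi>" "r = hinv p'" by auto
      have "r permutes {0..<?N}" using p' permutes_inv unfolding Q_def by auto
      moreover have "\<forall>y\<in>{0..<?N}. d (r y) = c y" using p' unfolding Q_def c_def d_def by auto
      ultimately show "r \<in> pset {0..<?N} c d" unfolding pset_def by auto
    qed
    have cL: "c ` {0..<?N} \<subseteq> {0..<k}"
    proof
      fix z assume "z \<in> c ` {0..<?N}"
      then obtain x where x: "x < ?N" "z = c x" by auto
      have "hinv \<pi> x div m < n" using div_lt[OF m inv_perm_lt[OF pp x(1)]] .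
      then show "z \<in> {0..<k}" using \<sigma> x unfolding c_def by auto
    qed
    have dL: "d ` {0..<?N} \<subseteq> {0..<k}"
    proof
      fix z assume "z \<in> d ` {0..<?N}"
      then obtain y where y: "y < ?N" "z = d y" by auto
      have "y div m < n" using div_lt[OF m y(1)] .
      then show "z \<in> {0..<k}" using \<tau> y unfolding d_def by auto
    qed
    have fc: "card {x\<in>{0..<?N}. c x = l} = m * card {i\<in>{0..<n}. \<sigma> i = l}" for l
    proof -
      have "card {x\<in>{0..<?N}. c x = l} = card {y\<in>{0..<?N}. \<sigma> (y div m) = l}"
        unfolding c_def by (rule fib_inv_perm[OF pp, where f = "\<lambda>y. \<sigma> (y div m)"])
      also have "\<dots> = m * card {i\<in>{0..<n}. \<sigma> i = l}" by (rule card_blocks_const[OF m])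
      finally show ?thesis .
    qed
    have fd: "card {x\<in>{0..<?N}. d x = l} = m * card {i\<in>{0..<n}. \<tau> i = l}" for l
      unfolding d_def by (rule card_blocks_const[OF m])
    have iff: "(\<forall>l\<in>{0..<k}. card {y\<in>{0..<?N}. c y = l} = card {y\<in>{0..<?N}. d y = l}) = (\<tau> \<in> colset {0..<n} {0..<k} \<sigma>)"
    proof -
      have "(\<forall>l\<in>{0..<k}. card {y\<in>{0..<?N}. c y = l} = card {y\<in>{0..<?N}. d y = l})
          = (\<forall>l\<in>{0..<k}. m * card {i\<in>{0..<n}. \<sigma> i = l} = m * card {i\<in>{0..<n}. \<tau> i = l})"
        by (simp only: fc fd)
      also have "\<dots> = (\<forall>l\<in>{0..<k}. card {i\<in>{0..<n}. \<tau> i = l} = card {i\<in>{0..<n}. \<sigma> i = l})"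
        using m by auto
      also have "\<dots> = (\<tau> \<in> colset {0..<n} {0..<k} \<sigma>)" using \<tau> unfolding colset_def by auto
      finally show ?thesis .
    qed
    have "card (Q \<pi>) = card (hinv ` Q \<pi>)" by (rule card_image[OF inj, symmetric])
    also have "\<dots> \<le> card (pset {0..<?N} c d)" by (rule card_mono[OF finite_pset sub]) simp
    also have "\<dots> \<le> (if (\<forall>l\<in>{0..<k}. card {y\<in>{0..<?N}. c y = l} = card {y\<in>{0..<?N}. d y = l})
                   then (\<Prod>l\<in>{0..<k}. fact (card {y\<in>{0..<?N}. c y = l})) else 0)"
      by (rule card_pset_le[OF _ _ cL dL]) auto
    also have "\<dots> = R" by (subst iff) (simp only: R_def fc)
    finally show ?thesis .
  qed
  have "card (consS m n \<sigma> \<tau>) = (\<Sum>\<pi>\<in>?P. card (Q \<pi>))" unfolding eq using finP finQ by simp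
  also have "\<dots> \<le> (\<Sum>\<pi>\<in>?P. R)" using each by (intro sum_mono) auto
  also have "\<dots> = fact ?N * R" using card_permutations[of "{0..<?N}" ?N] by simp
  finally show ?thesis unfolding R_def by (simp split: if_splits)
qed

lemma sum_fibers_card:
  assumes "finite S"
  shows "(\<Sum>v\<in>g ` S. card {x\<in>S. g x = v}) = card S"
proof -
  have "card S = (\<Sum>x\<in>S. (1::nat))" by simp
  also have "\<dots> = (\<Sum>v\<in>g ` S. \<Sum>x\<in>{x. x \<in> S \<and> g x = v}. 1)" by (rule sum.image_gen[OF assms])
  also have "\<dots> = (\<Sum>v\<in>g ` S. card {x\<in>S. g x = v})" by simp
  finally show ?thesis by simp
qed

lemma sum_inv_card_fibers:
  assumes "finite S"
  shows "(\<Sum>x\<in>S. 1 / real (card {y\<in>S. g y = g x})) = real (card (g ` S))"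
proof -
  have "(\<Sum>x\<in>S. 1 / real (card {y\<in>S. g y = g x})) = (\<Sum>v\<in>g ` S. \<Sum>x\<in>{x. x \<in> S \<and> g x = v}. 1 / real (card {y\<in>S. g y = g x}))"
    by (rule sum.image_gen[OF assms])
  also have "\<dots> = (\<Sum>v\<in>g ` S. 1)"
  proof (rule sum.cong[OF refl])
    fix v assume v: "v \<in> g ` S"
    let ?F = "{x. x \<in> S \<and> g x = v}"
    have fin: "finite ?F" using assms by simp
    have ne: "?F \<noteq> {}" using v by auto
    have "(\<Sum>x\<in>?F. 1 / real (card {y\<in>S. g y = g x})) = (\<Sum>x\<in>?F. 1 / real (card ?F))"
      by (intro sum.cong) auto
    also have "\<dots> = 1" using fin ne by simp
    finally show "(\<Sum>x\<in>?F. 1 / real (card {y\<in>S. g y = g x})) = 1" .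
  qed
  also have "\<dots> = real (card (g ` S))" by simp
  finally show ?thesis .
qed

lemma surj_fib:
  assumes \<sigma>: "\<sigma> \<in> SurjS n k"
  shows "\<forall>l\<in>{0..<k}. 1 \<le> card {i\<in>{0..<n}. \<sigma> i = l} \<and> card {i\<in>{0..<n}. \<sigma> i = l} \<le> n"
    and "(\<Sum>l\<in>{0..<k}. card {i\<in>{0..<n}. \<sigma> i = l}) = n"
    and "k \<le> n"
proof -
  have img: "\<sigma> ` {0..<n} = {0..<k}" using \<sigma> unfolding SurjS_def by auto
  show "\<forall>l\<in>{0..<k}. 1 \<le> card {i\<in>{0..<n}. \<sigma> i = l} \<and> card {i\<in>{0..<n}. \<sigma> i = l} \<le> n"
  proof
    fix l assume l: "l \<in> {0..<k}"
    then obtain i where "i < n" "\<sigma> i = l" using img by (metis atLeastLessThan_iff imageE zero_le)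
    then have "{i\<in>{0..<n}. \<sigma> i = l} \<noteq> {}" by auto
    then have "1 \<le> card {i\<in>{0..<n}. \<sigma> i = l}" by (simp add: Suc_le_eq card_gt_0_iff)
    moreover have "card {i\<in>{0..<n}. \<sigma> i = l} \<le> card {0..<n}" by (rule card_mono) auto
    ultimately show "1 \<le> card {i\<in>{0..<n}. \<sigma> i = l} \<and> card {i\<in>{0..<n}. \<sigma> i = l} \<le> n" by simp
  qed
  show "(\<Sum>l\<in>{0..<k}. card {i\<in>{0..<n}. \<sigma> i = l}) = n"
    using sum_fibers_card[of "{0..<n}" \<sigma>] img by simp
  have "card (\<sigma> ` {0..<n}) \<le> card {0..<n}" by (rule card_image_le) simp
  then show "k \<le> n" using img by simp
qed

lemma C_lower:
  assumes \<sigma>: "\<sigma> \<in> SurjS n k" and k: "k \<ge> 1"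
  shows "(real n / 2) powr ((real k - 1) / 2) \<le> real (card (colset {0..<n} {0..<k} \<sigma>))"
proof -
  let ?C = "card (colset {0..<n} {0..<k} \<sigma>)"
  define f where "f l = card {i\<in>{0..<n}. \<sigma> i = l}" for l
  define Dk where "Dk = (\<Prod>i<k-1. n - i)"
  have f1: "\<forall>l\<in>{0..<k}. 1 \<le> f l" using surj_fib(1)[OF \<sigma>] unfolding f_def by auto
  have fs: "sum f {0..<k} = n" using surj_fib(2)[OF \<sigma>] unfolding f_def by simp
  have kn: "k \<le> n" using surj_fib(3)[OF \<sigma>] .
  have sE: "\<sigma> \<in> {0..<n} \<rightarrow>\<^sub>E {0..<k}" using \<sigma> unfolding SurjS_def by auto
  have cc: "?C * (\<Prod>l\<in>{0..<k}. fact (f l)) = fact n"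
    using card_colset[OF _ _ sE] unfolding f_def by simp
  have pf: "(\<Prod>l\<in>{0..<k}. fact (f l)) \<le> (fact (n - (k - 1)) :: nat)"
  proof -
    have "(\<Prod>l\<in>{0..<k}. fact (f l)) \<le> (fact (sum f {0..<k} + 1 - card {0..<k}) :: nat)"
      by (rule prod_fact_le) (use k f1 in auto)
    also have "sum f {0..<k} + 1 - card {0..<k} = n - (k - 1)" using fs k kn by simp
    finally show ?thesis .
  qed
  have ff: "fact (n - (k - 1)) * Dk = (fact n :: nat)" unfolding Dk_def by (rule fact_falling) (use kn in simp)
  have "fact (n - (k - 1)) * Dk \<le> fact (n - (k - 1)) * ?C"
  proof -
    have "fact (n - (k - 1)) * Dk = ?C * (\<Prod>l\<in>{0..<k}. fact (f l))" using ff cc by simp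
    also have "\<dots> \<le> ?C * fact (n - (k - 1))" using pf by (rule mult_le_mono2)
    finally show ?thesis by (simp add: mult.commute)
  qed
  then have DC: "Dk \<le> ?C" using fact_gt_zero[where 'a=nat] by (meson mult_le_cancel1 not_gr0 fact_nonzero)
  have Dsq: "n ^ (k - 1) \<le> Dk ^ 2" unfolding Dk_def by (rule falling_sq) (use kn k in simp)
  have npos: "real n > 0" using kn k by simp
  have "(real n powr ((real k - 1) / 2)) ^ 2 = real n powr (real 2 * ((real k - 1) / 2))"
    by (rule powr_power) (use npos in simp)
  also have "real n powr (real 2 * ((real k - 1) / 2)) = real n powr (real k - 1)"
  proof -
    have e2: "real 2 * ((real k - 1) / 2) = real k - 1" by simp
    show ?thesis by (simp only: e2)
  qed
  also have "\<dots> = real n ^ (k - 1)" using npos k by (simp add: powr_realpow[symmetric] of_nat_diff)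
  also have "\<dots> \<le> real Dk ^ 2" using Dsq by (metis of_nat_le_iff of_nat_power)
  finally have "(real n powr ((real k - 1) / 2)) ^ 2 \<le> real Dk ^ 2" .
  then have A: "real n powr ((real k - 1) / 2) \<le> real Dk" by (rule power2_le_imp_le) simp
  have B: "(real n / 2) powr ((real k - 1) / 2) \<le> real n powr ((real k - 1) / 2)"
    by (rule powr_mono2) (use k npos in auto)
  show ?thesis using A B DC by (meson of_nat_le_iff order_trans)
qed

lemma card_fibv:
  assumes k: "k \<ge> 1"
  shows "card (fibv n k ` SurjS n k) \<le> n ^ (k - 1)"
proof -
  let ?W = "{0..<k-1} \<rightarrow>\<^sub>E {1..n}"
  let ?r = "\<lambda>v. restrict v {0..<k-1}"
  have sub: "fibv n k ` SurjS n k \<subseteq> {v \<in> {0..<k} \<rightarrow>\<^sub>E {1..n}. sum v {0..<k} = n}"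
  proof
    fix v assume "v \<in> fibv n k ` SurjS n k"
    then obtain \<sigma> where \<sigma>: "\<sigma> \<in> SurjS n k" and v: "v = fibv n k \<sigma>" by auto
    have "v \<in> {0..<k} \<rightarrow>\<^sub>E {1..n}" using surj_fib(1)[OF \<sigma>] unfolding v fibv_def by auto
    moreover have "sum v {0..<k} = n" using surj_fib(2)[OF \<sigma>] unfolding v fibv_def by simp
    ultimately show "v \<in> {v \<in> {0..<k} \<rightarrow>\<^sub>E {1..n}. sum v {0..<k} = n}" by simp
  qed
  have inj: "inj_on ?r {v \<in> {0..<k} \<rightarrow>\<^sub>E {1..n}. sum v {0..<k} = n}"
  proof (rule inj_onI)
    fix v w assume v: "v \<in> {v \<in> {0..<k} \<rightarrow>\<^sub>E {1..n}. sum v {0..<k} = n}"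
      and w: "w \<in> {v \<in> {0..<k} \<rightarrow>\<^sub>E {1..n}. sum v {0..<k} = n}" and e: "?r v = ?r w"
    have lt: "v l = w l" if "l < k - 1" for l using fun_cong[OF e, of l] that by simp
    have split: "{0..<k} = insert (k-1) {0..<k-1}" using k by auto
    have "sum v {0..<k} = v (k-1) + sum v {0..<k-1}" unfolding split by simp
    moreover have "sum w {0..<k} = w (k-1) + sum w {0..<k-1}" unfolding split by simp
    moreover have "sum v {0..<k-1} = sum w {0..<k-1}" using lt by (intro sum.cong) auto
    ultimately have vk: "v (k-1) = w (k-1)" using v w by simp
    have "\<forall>l\<in>{0..<k}. v l = w l"
    proof (intro ballI)
      fix l assume l: "l \<in> {0..<k}"
      show "v l = w l"
      proof (cases "l = k - 1")
        case True then show ?thesis using vk by simp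
      next
        case False then have "l < k - 1" using l by auto
        then show ?thesis using lt by simp
      qed
    qed
    then show "v = w" using v w by (intro PiE_ext) auto
  qed
  have img: "?r ` {v \<in> {0..<k} \<rightarrow>\<^sub>E {1..n}. sum v {0..<k} = n} \<subseteq> ?W" by auto
  have "card (fibv n k ` SurjS n k) \<le> card {v \<in> {0..<k} \<rightarrow>\<^sub>E {1..n}. sum v {0..<k} = n}"
  proof (rule card_mono[OF _ sub])
    show "finite {v \<in> {0..<k} \<rightarrow>\<^sub>E {1..n}. sum v {0..<k} = n}"
      by (rule finite_subset[where B = "{0..<k} \<rightarrow>\<^sub>E {1..n}"]) (auto intro!: finite_PiE)
  qed
  also have "\<dots> = card (?r ` {v \<in> {0..<k} \<rightarrow>\<^sub>E {1..n}. sum v {0..<k} = n})" by (rule card_image[OF inj, symmetric])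
  also have "\<dots> \<le> card ?W" by (rule card_mono[OF _ img]) (auto intro: finite_PiE)
  also have "\<dots> = n ^ (k - 1)" by (simp add: card_PiE)
  finally show ?thesis .
qed

lemma per_sigma:
  fixes m n k :: nat
  assumes m: "m > 0" and \<sigma>: "\<sigma> \<in> {0..<n} \<rightarrow>\<^sub>E {0..<k}"
  shows "real (\<Sum>\<tau>\<in>{0..<n} \<rightarrow>\<^sub>E {0..<k}. card (consS m n \<sigma> \<tau>))
           \<le> real (fact (m*n))^2 / real (card (colset {0..<n} {0..<k} \<sigma>))^(m-1)"
proof -
  let ?Cn = "{0..<n} \<rightarrow>\<^sub>E {0..<k}"
  let ?CS = "colset {0..<n} {0..<k} \<sigma>"
  let ?N = "m*n"
  define X :: nat where "X = fact ?N * (\<Prod>l\<in>{0..<k}. fact (m * card {i\<in>{0..<n}. \<sigma> i = l}))"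
  have finCn: "finite ?Cn" by (rule finite_PiE) auto
  have CSsub: "?CS \<subseteq> ?Cn" unfolding colset_def by auto
  have s1: "(\<Sum>\<tau>\<in>?Cn. card (consS m n \<sigma> \<tau>)) \<le> card ?CS * X"
  proof -
    have "(\<Sum>\<tau>\<in>?Cn. card (consS m n \<sigma> \<tau>)) \<le> (\<Sum>\<tau>\<in>?Cn. if \<tau> \<in> ?CS then X else 0)"
      using cons_bound[OF m \<sigma>] unfolding X_def by (intro sum_mono) auto
    also have "\<dots> = (\<Sum>\<tau>\<in>?CS. X)"
    proof -
      have "(\<Sum>\<tau>\<in>?Cn. if \<tau> \<in> ?CS then X else 0) = (\<Sum>\<tau>\<in>?Cn \<inter> ?CS. X)"
        by (subst sum.inter_restrict[OF finCn]) (rule refl)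
      also have "?Cn \<inter> ?CS = ?CS" using CSsub by auto
      finally show ?thesis .
    qed
    also have "\<dots> = card ?CS * X" by simp
    finally show ?thesis .
  qed
  define e0 where "e0 = restrict (\<lambda>y. \<sigma> (y div m)) {0..<?N}"
  let ?D = "colset {0..<?N} {0..<k} e0"
  have e0E: "e0 \<in> {0..<?N} \<rightarrow>\<^sub>E {0..<k}" using \<sigma> div_lt[OF m] unfolding e0_def by auto
  have fe0: "card {y\<in>{0..<?N}. e0 y = l} = m * card {i\<in>{0..<n}. \<sigma> i = l}" for l
  proof -
    have "{y\<in>{0..<?N}. e0 y = l} = {y\<in>{0..<?N}. \<sigma> (y div m) = l}" unfolding e0_def by auto
    then show ?thesis using card_blocks_const[OF m, where f = \<sigma> and l = l and n = n] by simp
  qed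
  have DP: "card ?D * (\<Prod>l\<in>{0..<k}. fact (m * card {i\<in>{0..<n}. \<sigma> i = l})) = fact ?N"
    using card_colset[OF _ _ e0E] unfolding fe0 by simp
  have CD: "card ?CS ^ m \<le> card ?D" using colset_power[OF m \<sigma>] unfolding e0_def .
  have C1: "card ?CS \<ge> 1"
  proof -
    have "finite ?CS" using finCn CSsub finite_subset by blast
    moreover have "\<sigma> \<in> ?CS" by (rule colset_self[OF \<sigma>])
    ultimately have "card ?CS > 0" by (auto simp: card_gt_0_iff)
    then show ?thesis by simp
  qed
  define c where "c = real (card ?CS)"
  define d where "d = real (card ?D)"
  define f where "f = real (fact ?N :: nat)"
  define P where "P = real (\<Prod>l\<in>{0..<k}. fact (m * card {i\<in>{0..<n}. \<sigma> i = l}) :: nat)"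
  have c1: "c \<ge> 1" using C1 unfolding c_def by simp
  have dP: "d * P = f" unfolding d_def P_def f_def by (simp only: of_nat_mult[symmetric] DP)
  have cd: "c ^ m \<le> d" unfolding c_def d_def by (simp only: of_nat_power[symmetric] of_nat_le_iff CD)
  have cm: "c ^ m = c * c ^ (m-1)" using m by (cases m) auto
  have cmpos: "c ^ m > 0" using c1 by simp
  have dpos: "d > 0" using cmpos cd by linarith
  have Pd: "P = f / d" using dP dpos by (simp add: field_simps)
  have "real (\<Sum>\<tau>\<in>?Cn. card (consS m n \<sigma> \<tau>)) \<le> real (card ?CS * X)" using s1 by (simp only: of_nat_le_iff)
  also have "real (card ?CS * X) = c * (f * P)" unfolding c_def f_def P_def X_def by simp
  also have "\<dots> = (c * f * f) / d" unfolding Pd by simp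
  also have "\<dots> \<le> (c * f * f) / c ^ m"
    by (rule divide_left_mono[OF cd]) (use c1 cmpos dpos in \<open>auto simp: f_def intro!: mult_pos_pos\<close>)
  also have "\<dots> = f ^ 2 / c ^ (m - 1)" unfolding cm using c1 by (simp add: power2_eq_square)
  finally show ?thesis unfolding f_def c_def .
qed

theorem mainTheorem5:
  fixes ty :: "'a::{field,finite} itself"
  and n m k :: nat
  assumes "n \<ge> 1" and "m \<ge> 3" and "k \<ge> 1"
  shows "real (card {(\<pi>, \<pi>'). \<pi> permutes {0..<m*n} \<and> \<pi>' permutes {0..<m*n}
                    \<and> deficiency ty m n \<pi> \<pi>' \<ge> k})
         / (real (fact (m*n)))^2
       \<le> (real n ^ 2 / (real n / 2) ^ (m - 2)) powr ((real k - 1) / 2)"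
proof -
  have m: "m > 0" using assms by simp
  have k: "k \<ge> 1" using assms by simp
  let ?N = "m*n"
  let ?Ev = "{(\<pi>, \<pi>'). \<pi> permutes {0..<m*n} \<and> \<pi>' permutes {0..<m*n} \<and> deficiency ty m n \<pi> \<pi>' \<ge> k}"
  let ?Cn = "{0..<n} \<rightarrow>\<^sub>E {0..<k}"
  let ?S = "SurjS n k"
  let ?P = "{\<pi>. \<pi> permutes {0..<?N}}"
  define B where "B = (real n / 2) powr ((real k - 1) / 2)"
  define C where "C \<sigma> = real (card (colset {0..<n} {0..<k} \<sigma>))" for \<sigma>
  define G where "G \<sigma> = real (card {\<sigma>'\<in>?S. fibv n k \<sigma>' = fibv n k \<sigma>})" for \<sigma>
  define F where "F = real (fact ?N :: nat)"
  have Fpos: "F > 0" unfolding F_def by simp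
  have npos: "real n > 0" using assms by simp
  have Bpos: "B > 0" unfolding B_def using npos by simp
  have finCn: "finite ?Cn" by (rule finite_PiE) auto
  have finS: "finite ?S" unfolding SurjS_def using finCn by simp
  have finP: "finite ?P" by (rule finite_permutations) simp
  have finCons: "finite (consS m n \<sigma> \<tau>)" for \<sigma> \<tau>
    by (rule finite_subset[where B = "?P \<times> ?P"]) (auto simp: consS_def finP)
  have sub: "?Ev \<subseteq> (\<Union>\<sigma>\<in>?S. \<Union>\<tau>\<in>?Cn. consS m n \<sigma> \<tau>)"
  proof
    fix z assume "z \<in> ?Ev"
    then obtain \<pi> \<pi>' where z: "z = (\<pi>, \<pi>')" and p: "\<pi> permutes {0..<m*n}" and p': "\<pi>' permutes {0..<m*n}"
      and d: "deficiency ty m n \<pi> \<pi>' \<ge> k" by auto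
    obtain \<sigma> \<tau> where \<sigma>: "\<sigma> \<in> ?Cn" "\<sigma> ` {0..<n} = {0..<k}" and \<tau>: "\<tau> \<in> ?Cn"
      and c: "\<forall>x<m*n. \<sigma> (hinv \<pi> x div m) = \<tau> (hinv \<pi>' x div m)"
      using defic_coloring[OF m p p' d k] by blast
    have "\<sigma> \<in> ?S" using \<sigma> unfolding SurjS_def by simp
    moreover have "z \<in> consS m n \<sigma> \<tau>" unfolding z consS_def using p p' c by simp
    ultimately show "z \<in> (\<Union>\<sigma>\<in>?S. \<Union>\<tau>\<in>?Cn. consS m n \<sigma> \<tau>)" using \<tau> by blast
  qed
  have "card ?Ev \<le> card (\<Union>\<sigma>\<in>?S. \<Union>\<tau>\<in>?Cn. consS m n \<sigma> \<tau>)"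
    by (rule card_mono[OF _ sub]) (use finS finCn finCons in auto)
  also have "\<dots> \<le> (\<Sum>\<sigma>\<in>?S. card (\<Union>\<tau>\<in>?Cn. consS m n \<sigma> \<tau>))" by (rule card_UN_le[OF finS])
  also have "\<dots> \<le> (\<Sum>\<sigma>\<in>?S. \<Sum>\<tau>\<in>?Cn. card (consS m n \<sigma> \<tau>))"
    by (intro sum_mono card_UN_le[OF finCn])
  finally have c1: "card ?Ev \<le> (\<Sum>\<sigma>\<in>?S. \<Sum>\<tau>\<in>?Cn. card (consS m n \<sigma> \<tau>))" .
  have each: "real (\<Sum>\<tau>\<in>?Cn. card (consS m n \<sigma> \<tau>)) \<le> F^2 * ((1 / B) ^ (m - 2) * (1 / G \<sigma>))"
    if \<sigma>: "\<sigma> \<in> ?S" for \<sigma>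
  proof -
    have \<sigma>E: "\<sigma> \<in> ?Cn" using \<sigma> unfolding SurjS_def by simp
    have CB: "B \<le> C \<sigma>" unfolding B_def C_def by (rule C_lower[OF \<sigma> k])
    have Gsub: "{\<sigma>'\<in>?S. fibv n k \<sigma>' = fibv n k \<sigma>} \<subseteq> colset {0..<n} {0..<k} \<sigma>"
    proof
      fix \<sigma>' assume s': "\<sigma>' \<in> {\<sigma>'\<in>?S. fibv n k \<sigma>' = fibv n k \<sigma>}"
      then have "\<sigma>' \<in> ?Cn" and fv: "fibv n k \<sigma>' = fibv n k \<sigma>" unfolding SurjS_def by auto
      moreover have "\<forall>l\<in>{0..<k}. card {y\<in>{0..<n}. \<sigma>' y = l} = card {y\<in>{0..<n}. \<sigma> y = l}"
      proof
        fix l assume l: "l \<in> {0..<k}"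
        have "fibv n k \<sigma>' l = fibv n k \<sigma> l" using fv by simp
        then show "card {y\<in>{0..<n}. \<sigma>' y = l} = card {y\<in>{0..<n}. \<sigma> y = l}"
          using l unfolding fibv_def by simp
      qed
      ultimately show "\<sigma>' \<in> colset {0..<n} {0..<k} \<sigma>" unfolding colset_def by simp
    qed
    have finCS: "finite (colset {0..<n} {0..<k} \<sigma>)"
      by (rule finite_subset[OF _ finCn]) (auto simp: colset_def)
    have G1: "G \<sigma> \<ge> 1"
    proof -
      have "\<sigma> \<in> {\<sigma>'\<in>?S. fibv n k \<sigma>' = fibv n k \<sigma>}" using \<sigma> by simp
      moreover have "finite {\<sigma>'\<in>?S. fibv n k \<sigma>' = fibv n k \<sigma>}" using finS by simp
      ultimately have "card {\<sigma>'\<in>?S. fibv n k \<sigma>' = fibv n k \<sigma>} > 0" by (auto simp: card_gt_0_iff)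
      then show ?thesis unfolding G_def by simp
    qed
    have GC: "G \<sigma> \<le> C \<sigma>" unfolding G_def C_def by (simp only: of_nat_le_iff) (rule card_mono[OF finCS Gsub])
    have Cpos: "C \<sigma> > 0" using G1 GC by linarith
    have "real (\<Sum>\<tau>\<in>?Cn. card (consS m n \<sigma> \<tau>)) \<le> F^2 / C \<sigma> ^ (m - 1)"
      unfolding F_def C_def by (rule per_sigma[OF m \<sigma>E])
    also have "F^2 / C \<sigma> ^ (m - 1) = F^2 * ((1 / C \<sigma>) ^ (m - 2) * (1 / C \<sigma>))"
    proof -
      have "m - 1 = Suc (m - 2)" using assms by simp
      then show ?thesis by (simp add: power_one_over field_simps)
    qed
    also have "\<dots> \<le> F^2 * ((1 / B) ^ (m - 2) * (1 / G \<sigma>))"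
    proof (intro mult_left_mono mult_mono power_mono divide_left_mono)
      show "B \<le> C \<sigma>" by (rule CB)
      show "G \<sigma> \<le> C \<sigma>" by (rule GC)
    qed (use Bpos G1 Cpos in auto)
    finally show ?thesis .
  qed
  have "real (card ?Ev) \<le> real (\<Sum>\<sigma>\<in>?S. \<Sum>\<tau>\<in>?Cn. card (consS m n \<sigma> \<tau>))" using c1 by (simp only: of_nat_le_iff)
  also have "\<dots> = (\<Sum>\<sigma>\<in>?S. real (\<Sum>\<tau>\<in>?Cn. card (consS m n \<sigma> \<tau>)))" by simp
  also have "\<dots> \<le> (\<Sum>\<sigma>\<in>?S. F^2 * ((1 / B) ^ (m - 2) * (1 / G \<sigma>)))" using each by (rule sum_mono)
  also have "\<dots> = F^2 * ((1 / B) ^ (m - 2) * (\<Sum>\<sigma>\<in>?S. 1 / G \<sigma>))" by (simp add: sum_distrib_left)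
  also have "(\<Sum>\<sigma>\<in>?S. 1 / G \<sigma>) = real (card (fibv n k ` ?S))"
    unfolding G_def by (rule sum_inv_card_fibers[OF finS])
  also have "\<dots> \<le> real n ^ (k - 1)" using card_fibv[OF k, of n] by (metis of_nat_le_iff of_nat_power)
  finally have L: "real (card ?Ev) \<le> F^2 * ((1 / B) ^ (m - 2) * real n ^ (k - 1))"
    using Bpos Fpos by (simp add: mult_left_mono)
  have R: "(real n ^ 2 / (real n / 2) ^ (m - 2)) powr ((real k - 1) / 2) = real n ^ (k - 1) * (1 / B) ^ (m - 2)"
  proof -
    let ?e = "(real k - 1) / 2"
    have "(real n ^ 2 / (real n / 2) ^ (m - 2)) powr ?e = (real n ^ 2) powr ?e / ((real n / 2) ^ (m - 2)) powr ?e"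
      by (rule powr_divide)
    also have "(real n ^ 2) powr ?e = real n ^ (k - 1)"
    proof -
      have "(real n ^ 2) powr ?e = (real n powr (real 2)) powr ?e" using npos by (simp add: powr_realpow)
      also have "\<dots> = real n powr (real 2 * ?e)" by (rule powr_powr)
      also have "real 2 * ?e = real (k - 1)" using k by (simp add: of_nat_diff)
      also have "real n powr real (k - 1) = real n ^ (k - 1)" using npos by (rule powr_realpow)
      finally show ?thesis .
    qed
    also have "((real n / 2) ^ (m - 2)) powr ?e = B ^ (m - 2)"
    proof -
      have "((real n / 2) ^ (m - 2)) powr ?e = ((real n / 2) powr real (m - 2)) powr ?e" using npos by (simp add: powr_realpow)
      also have "\<dots> = (real n / 2) powr (real (m - 2) * ?e)" by (rule powr_powr)
      also have "\<dots> = ((real n / 2) powr ?e) ^ (m - 2)" by (rule powr_power[symmetric]) (use npos in simp)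
      finally show ?thesis unfolding B_def .
    qed
    finally show ?thesis by (simp add: power_one_over)
  qed
  show ?thesis
    unfolding R using L Fpos by (simp add: F_def divide_le_eq algebra_simps)
qed

end
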